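(* Let $\mathcal{B}$ be a complete topological ring and let $\mathrm{e}\colon\mathcal{B}\to\mathcal{B}\{T\}$ be a restricted exponential homomorphism. Assume that $\mathrm{e}$ has a local slice $s\in\mathcal{B}$ such that $\mathrm{e}(s)=s+T$. Then $\mathcal{B}\cong\mathcal{B}^{\mathrm{e}}\{s\}$ (that is, the continuous $\mathcal{B}^{\mathrm{e}}$-algebra homomorphism $\mathcal{B}^{\mathrm{e}}\{S\}\to\mathcal{B}$, $S\mapsto s$, is an isomorphism of topological rings), and under this identification $\mathrm{e}$ coincides with the homomorphism of topological $\mathcal{B}^{\mathrm{e}}$-algebras $\mathcal{B}^{\mathrm{e}}\{s\}\to\mathcal{B}^{\mathrm{e}}\{s\}\{T\}\cong\mathcal{B}^{\mathrm{e}}\{s,T\}$, $s\mapsto s+T$.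
   Context: Conventions: topological rings are linearly topologized with a countable fundamental system of open ideals; homomorphisms are continuous; complete means the canonical map to $\varprojlim_{\mathfrak{a}}\mathcal{B}/\mathfrak{a}$ (open ideals, discrete quotients) is a topological isomorphism. For a complete topological ring $\mathcal{C}$, $\mathcal{C}\{T_1,\dots,T_r\}$ denotes restricted power series (coefficients converging to $0$), topologized by the ideals of series with all coefficients in a given open ideal of $\mathcal{C}$. A restricted exponential homomorphism is a continuous ring homomorphism $\mathrm{e}\colon\mathcal{B}\to\mathcal{B}\{T\}$, $\mathrm{e}(b)=\sum_i\mathrm{e}_i(b)T^i$, with $\mathrm{e}_0=\mathrm{id}_{\mathcal{B}}$ and $\sum_{i,j}\mathrm{e}_j(\mathrm{e}_i(b))T'^jT^i=\sum_\ell\mathrm{e}_\ell(b)(T+T')^\ell$ in $\mathcal{B}\{T,T'\}$ for all $b$. $\mathcal{B}^{\mathrm{e}}=\{b:\mathrm{e}(b)=b\}$ with the induced topology (a complete subring). A local slice is $s\in\mathcal{B}$ with $\mathrm{e}(s)$ a polynomial of degree $1$ in $T$. *)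

theory Defs
  imports Main
begin

text \<open>A linear topology with a countable fundamental system of open ideals is
  given by a decreasing chain U 0 \<supseteq> U 1 \<supseteq> ... of ideals.\<close>

definition is_ideal :: "'a::comm_ring_1 set \<Rightarrow> bool" where
  "is_ideal I \<longleftrightarrow> 0 \<in> I \<and> (\<forall>x\<in>I. \<forall>y\<in>I. x + y \<in> I) \<and> (\<forall>r x. x \<in> I \<longrightarrow> r * x \<in> I)"

definition lin_top :: "(nat \<Rightarrow> 'a::comm_ring_1 set) \<Rightarrow> bool" where
  "lin_top U \<longleftrightarrow> (\<forall>n. is_ideal (U n)) \<and> (\<forall>n. U (Suc n) \<subseteq> U n)"

text \<open>Completeness: the canonical map to the inverse limit of the B/U n is bijective
  (then it is automatically a topological isomorphism).\<close>
definition complete_lt :: "(nat \<Rightarrow> 'a::comm_ring_1 set) \<Rightarrow> bool" where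
  "complete_lt U \<longleftrightarrow> (\<Inter>n. U n) = {0} \<and>
     (\<forall>x. (\<forall>n. x (Suc n) - x n \<in> U n) \<longrightarrow> (\<exists>y. \<forall>n. y - x n \<in> U n))"

definition null_seq :: "(nat \<Rightarrow> 'a::comm_ring_1 set) \<Rightarrow> (nat \<Rightarrow> 'a) \<Rightarrow> bool" where
  "null_seq U a \<longleftrightarrow> (\<forall>n. \<exists>N. \<forall>i\<ge>N. a i \<in> U n)"

definition sums_in :: "(nat \<Rightarrow> 'a::comm_ring_1 set) \<Rightarrow> (nat \<Rightarrow> 'a) \<Rightarrow> 'a \<Rightarrow> bool" where
  "sums_in U a x \<longleftrightarrow> (\<forall>n. \<exists>N. \<forall>M\<ge>N. x - (\<Sum>i<M. a i) \<in> U n)"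

text \<open>Restricted power series in one variable with coefficients in the subring C
  (with the topology induced by U).\<close>
definition rps :: "'a::comm_ring_1 set \<Rightarrow> (nat \<Rightarrow> 'a set) \<Rightarrow> (nat \<Rightarrow> 'a) set" where
  "rps C U = {a. (\<forall>i. a i \<in> C) \<and> null_seq U a}"

definition cprod :: "(nat \<Rightarrow> 'a::comm_ring_1) \<Rightarrow> (nat \<Rightarrow> 'a) \<Rightarrow> nat \<Rightarrow> 'a" where
  "cprod a b = (\<lambda>n. \<Sum>i\<le>n. a i * b (n - i))"

definition rps_eval :: "(nat \<Rightarrow> 'a::comm_ring_1 set) \<Rightarrow> 'a \<Rightarrow> (nat \<Rightarrow> 'a) \<Rightarrow> 'a" where
  "rps_eval U s a = (THE x. sums_in U (\<lambda>i. a i * s ^ i) x)"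

text \<open>A restricted exponential homomorphism e : B \<rightarrow> B{T}, written via its
  coefficient maps: e i b is the coefficient of T^i in e(b).\<close>
definition rexp_hom :: "(nat \<Rightarrow> 'a::comm_ring_1 set) \<Rightarrow> (nat \<Rightarrow> 'a \<Rightarrow> 'a) \<Rightarrow> bool" where
  "rexp_hom U e \<longleftrightarrow>
     (\<forall>b. null_seq U (\<lambda>i. e i b)) \<and>
     (\<forall>i b c. e i (b + c) = e i b + e i c) \<and>
     (\<forall>n b c. e n (b * c) = cprod (\<lambda>i. e i b) (\<lambda>i. e i c) n) \<and>
     (\<forall>i. e i 1 = (if i = 0 then 1 else 0)) \<and>
     (\<forall>n. \<exists>m. \<forall>b\<in>U m. \<forall>i. e i b \<in> U n) \<and>
     (\<forall>b. e 0 b = b) \<and>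
     (\<forall>i j b. e j (e i b) = of_nat ((i + j) choose i) * e (i + j) b)"

definition fixed_ring :: "(nat \<Rightarrow> 'a::comm_ring_1 \<Rightarrow> 'a) \<Rightarrow> 'a set" where
  "fixed_ring e = {b. \<forall>i>0. e i b = 0}"

end

theory Submission
  imports Defs
begin


definition ssum :: "(nat \<Rightarrow> 'a::comm_ring_1 set) \<Rightarrow> (nat \<Rightarrow> 'a) \<Rightarrow> 'a" where
  "ssum U a = (THE x. sums_in U a x)"

lemma rps_eval_ssum: "rps_eval U s a = ssum U (\<lambda>i. a i * s ^ i)"
  by (simp add: rps_eval_def ssum_def)

lemma sum_atMost_only0:
  fixes g :: "nat \<Rightarrow> 'a::comm_ring_1"
  assumes "\<forall>i>0. g i = 0" shows "(\<Sum>i\<le>j. g i) = g 0"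
  using assms by (induction j) auto

lemma reindex_tri:
  fixes F :: "nat \<Rightarrow> nat \<Rightarrow> 'a::comm_ring_1"
  shows "(\<Sum>m<M. \<Sum>i\<le>m. F i (m - i)) = (\<Sum>i<M. \<Sum>k<M-i. F i k)"
proof (induction M)
  case 0 then show ?case by simp
next
  case (Suc M)
  have "(\<Sum>i<Suc M. \<Sum>k<Suc M-i. F i k) = (\<Sum>i<M. \<Sum>k<Suc (M-i). F i k) + F M 0"
    by (simp add: Suc_diff_le)
  also have "\<dots> = (\<Sum>i<M. (\<Sum>k<M-i. F i k) + F i (M - i)) + F M 0"
    by simp
  also have "\<dots> = (\<Sum>i<M. \<Sum>k<M-i. F i k) + ((\<Sum>i<M. F i (M - i)) + F M 0)"
    by (simp add: sum.distrib add.assoc)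
  also have "(\<Sum>i<M. F i (M - i)) + F M 0 = (\<Sum>i\<le>M. F i (M - i))"
    by (simp add: lessThan_Suc_atMost[symmetric])
  finally show ?case using Suc by simp
qed

lemma choose_ident:
  assumes "d \<le> j"
  shows "(t + d choose d) * (t + j choose (t + d)) = (j choose d) * (t + j choose j)"
proof -
  obtain r where j: "j = d + r" using assms le_Suc_ex by blast
  have 1: "(t + r + d choose (t + d)) * (t + d choose d) = (t + r + d choose d) * (t + r choose t)"
    using choose_mult_lemma[of t r d] by simp
  have 2: "(r + t + d choose (r + d)) * (r + d choose d) = (r + t + d choose d) * (r + t choose r)"
    using choose_mult_lemma[of r t d] by simp
  have "(r + t choose r) = (r + t choose (r + t - r))" by (rule binomial_symmetric) simp
  then have 3: "(r + t choose r) = (t + r choose t)" by (simp add: add.commute[of r t])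
  have L: "(t + d choose d) * (t + (d + r) choose (t + d)) = (t + r + d choose d) * (t + r choose t)"
    using 1 by (simp add: ac_simps)
  have R: "(d + r choose d) * (t + (d + r) choose (d + r)) = (t + r + d choose d) * (t + r choose t)"
    using 2 3 by (simp add: ac_simps)
  show ?thesis unfolding j using L R by simp
qed

locale LT =
  fixes U :: "nat \<Rightarrow> 'a::comm_ring_1 set"
  assumes lt: "lin_top U" and cpl: "complete_lt U"
begin

lemma Uid: "is_ideal (U n)" using lt unfolding lin_top_def by blast
lemma U0: "0 \<in> U n" using Uid[of n] unfolding is_ideal_def by (elim conjE)
lemma Uadd: "x \<in> U n \<Longrightarrow> y \<in> U n \<Longrightarrow> x + y \<in> U n"
  using Uid[of n] unfolding is_ideal_def by blast
lemma Umult: "x \<in> U n \<Longrightarrow> r * x \<in> U n"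
  using Uid[of n] unfolding is_ideal_def by (elim conjE) (erule allE[of _ r], erule allE[of _ x], simp)
lemma Umult2: "x \<in> U n \<Longrightarrow> x * r \<in> U n"
proof -
  assume "x \<in> U n" then have "r * x \<in> U n" by (rule Umult)
  moreover have "r * x = x * r" by (rule mult.commute)
  ultimately show ?thesis by simp
qed
lemma Uneg: "x \<in> U n \<Longrightarrow> - x \<in> U n"
proof -
  assume "x \<in> U n" then have "(-1) * x \<in> U n" by (rule Umult)
  then show ?thesis by simp
qed
lemma Udiff: "x \<in> U n \<Longrightarrow> y \<in> U n \<Longrightarrow> x - y \<in> U n"
proof -
  assume "x \<in> U n" "y \<in> U n"
  then have "x + (- y) \<in> U n" by (intro Uadd Uneg)
  then show ?thesis by simp
qed
lemma Usum: "finite A \<Longrightarrow> (\<forall>i\<in>A. f i \<in> U n) \<Longrightarrow> sum f A \<in> U n"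
proof (induction A rule: finite_induct)
  case empty then show ?case by (simp add: U0)
next
  case (insert x F) then show ?case by (simp add: Uadd)
qed
lemma Umono: "m \<le> n \<Longrightarrow> U n \<subseteq> U m"
  by (rule lift_Suc_antimono_le[of U]) (use lt in \<open>simp_all add: lin_top_def\<close>)

lemma Ueq: "x \<in> U n \<Longrightarrow> x = y \<Longrightarrow> y \<in> U n" by simp

lemma sum_lt_diff: fixes f :: "nat \<Rightarrow> 'a" shows "(m::nat) \<le> n \<Longrightarrow> (\<Sum>i<n. f i) - (\<Sum>i<m. f i) = (\<Sum>i\<in>{m..<n}. f i)"
  using sum_diff_nat_ivl[of 0 m n f] by (simp add: atLeast0LessThan)

lemma haus: "(\<forall>n. x \<in> U n) \<Longrightarrow> x = 0"
proof -
  assume "\<forall>n. x \<in> U n"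
  then have "x \<in> (\<Inter>n. U n)" by simp
  moreover have "(\<Inter>n. U n) = {0}" using cpl unfolding complete_lt_def by (elim conjE)
  ultimately show "x = 0" by simp
qed

lemma sums_unique: "sums_in U a x \<Longrightarrow> sums_in U a y \<Longrightarrow> x = y"
proof -
  assume ax: "sums_in U a x" and ay: "sums_in U a y"
  have "\<forall>n. x - y \<in> U n"
  proof
    fix n
    obtain N1 where N1: "\<forall>M\<ge>N1. x - (\<Sum>i<M. a i) \<in> U n" using ax unfolding sums_in_def by blast
    obtain N2 where N2: "\<forall>M\<ge>N2. y - (\<Sum>i<M. a i) \<in> U n" using ay unfolding sums_in_def by blast
    have "(x - (\<Sum>i<max N1 N2. a i)) - (y - (\<Sum>i<max N1 N2. a i)) \<in> U n"
      by (rule Udiff) (use N1 N2 in auto)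
    moreover have "(x - (\<Sum>i<max N1 N2. a i)) - (y - (\<Sum>i<max N1 N2. a i)) = x - y" by simp
    ultimately show "x - y \<in> U n" by (rule Ueq)
  qed
  then have "x - y = 0" by (rule haus)
  then show "x = y" by simp
qed

lemma ssum_eq: "sums_in U a x \<Longrightarrow> ssum U a = x"
  unfolding ssum_def
proof (rule the_equality)
  fix y assume "sums_in U a x" "sums_in U a y"
  then show "y = x" using sums_unique[of a y x] by simp
qed

lemma sums_exists:
  assumes "null_seq U a" shows "\<exists>x. sums_in U a x"
proof -
  have "\<forall>n. \<exists>N. \<forall>i\<ge>N. a i \<in> U n" using assms unfolding null_seq_def by simp
  from choice[OF this] obtain N0 where N0'': "\<forall>n. \<forall>i\<ge>N0 n. a i \<in> U n" by blast
  then have N0: "\<And>n i. i \<ge> N0 n \<Longrightarrow> a i \<in> U n" by blast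
  define N where "N n = (\<Sum>k\<le>n. N0 k)" for n
  have Nmono: "N n \<le> N (Suc n)" for n unfolding N_def by simp
  have NN0: "N0 n \<le> N n" for n unfolding N_def
    by (rule member_le_sum) auto
  have N0': "a i \<in> U n" if "N n \<le> i" for i n
  proof -
    have "N0 n \<le> i" using NN0[of n] that by linarith
    then show ?thesis by (rule N0)
  qed
  have Nm: "m \<le> n \<Longrightarrow> N m \<le> N n" for m n
    using Nmono by (simp add: lift_Suc_mono_le)
  define x where "x n = (\<Sum>i<N n. a i)" for n
  have "x (Suc n) - x n \<in> U n" for n
  proof -
    have "x (Suc n) - x n = (\<Sum>i\<in>{N n..<N (Suc n)}. a i)"
      unfolding x_def using Nmono[of n]
      by (rule sum_lt_diff)
    also have "\<dots> \<in> U n"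
      by (rule Usum) (use N0' in auto)
    finally show ?thesis .
  qed
  then obtain y where y: "\<forall>n. y - x n \<in> U n"
    using cpl unfolding complete_lt_def by blast
  have "sums_in U a y"
    unfolding sums_in_def
  proof
    fix n
    have "\<forall>M\<ge>N n. y - (\<Sum>i<M. a i) \<in> U n"
    proof (intro allI impI)
      fix M assume M: "M \<ge> N n"
      have "(\<Sum>i<M. a i) - x n = (\<Sum>i\<in>{N n..<M}. a i)"
        unfolding x_def using M by (rule sum_lt_diff)
      also have "\<dots> \<in> U n"
        by (rule Usum) (use N0' in auto)
      finally have "(y - x n) - ((\<Sum>i<M. a i) - x n) \<in> U n"
        using y Udiff by blast
      then show "y - (\<Sum>i<M. a i) \<in> U n" by simp
    qed
    then show "\<exists>N. \<forall>M\<ge>N. y - (\<Sum>i<M. a i) \<in> U n" by (rule exI)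
  qed
  then show ?thesis by blast
qed

lemma ssum_sums: "null_seq U a \<Longrightarrow> sums_in U a (ssum U a)"
proof -
  assume "null_seq U a"
  then obtain x where "sums_in U a x" using sums_exists by blast
  then show ?thesis by (simp add: ssum_eq)
qed

lemma sums_add: "sums_in U a x \<Longrightarrow> sums_in U b y \<Longrightarrow> sums_in U (\<lambda>i. a i + b i) (x + y)"
  unfolding sums_in_def
proof (intro allI)
  fix n assume A: "\<forall>n. \<exists>N. \<forall>M\<ge>N. x - sum a {..<M} \<in> U n" and B: "\<forall>n. \<exists>N. \<forall>M\<ge>N. y - sum b {..<M} \<in> U n"
  obtain N1 where N1: "\<forall>M\<ge>N1. x - sum a {..<M} \<in> U n" using A by blast
  obtain N2 where N2: "\<forall>M\<ge>N2. y - sum b {..<M} \<in> U n" using B by blast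
  have "\<forall>M\<ge>max N1 N2. x + y - (\<Sum>i<M. a i + b i) \<in> U n"
  proof (intro allI impI)
    fix M assume "M \<ge> max N1 N2"
    then have "(x - sum a {..<M}) + (y - sum b {..<M}) \<in> U n" by (intro Uadd) (use N1 N2 in auto)
    moreover have "(x - sum a {..<M}) + (y - sum b {..<M}) = x + y - (\<Sum>i<M. a i + b i)"
      by (simp add: sum.distrib)
    ultimately show "x + y - (\<Sum>i<M. a i + b i) \<in> U n" by simp
  qed
  then show "\<exists>N. \<forall>M\<ge>N. x + y - (\<Sum>i<M. a i + b i) \<in> U n" by (rule exI)
qed

lemma sums_cmult: "sums_in U a x \<Longrightarrow> sums_in U (\<lambda>i. c * a i) (c * x)"
  unfolding sums_in_def
proof (intro allI)
  fix n assume A: "\<forall>n. \<exists>N. \<forall>M\<ge>N. x - sum a {..<M} \<in> U n"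
  obtain N1 where N1: "\<forall>M\<ge>N1. x - sum a {..<M} \<in> U n" using A by blast
  have "\<forall>M\<ge>N1. c * x - (\<Sum>i<M. c * a i) \<in> U n"
  proof (intro allI impI)
    fix M assume "M \<ge> N1"
    then have "c * (x - sum a {..<M}) \<in> U n" by (intro Umult) (use N1 in auto)
    then show "c * x - (\<Sum>i<M. c * a i) \<in> U n" by (simp add: right_diff_distrib sum_distrib_left)
  qed
  then show "\<exists>N. \<forall>M\<ge>N. c * x - (\<Sum>i<M. c * a i) \<in> U n" by (rule exI)
qed

lemma sums_rmult: "sums_in U a x \<Longrightarrow> sums_in U (\<lambda>i. a i * c) (x * c)"
proof -
  assume "sums_in U a x"
  then have "sums_in U (\<lambda>i. c * a i) (c * x)" by (rule sums_cmult)
  moreover have "(\<lambda>i. c * a i) = (\<lambda>i. a i * c)" by (rule ext) (rule mult.commute)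
  moreover have "c * x = x * c" by (rule mult.commute)
  ultimately show ?thesis by simp
qed

lemma sums_finite: "(\<forall>i\<ge>N. a i = 0) \<Longrightarrow> sums_in U a (\<Sum>i<N. a i)"
  unfolding sums_in_def
proof (intro allI exI[of _ N] impI allI)
  fix n M assume z: "\<forall>i\<ge>N. a i = 0" and M: "N \<le> M"
  have "(\<Sum>i<M. a i) = (\<Sum>i<N. a i)"
    by (rule sum.mono_neutral_right) (use z M in auto)
  then show "sum a {..<N} - sum a {..<M} \<in> U n" by (simp add: U0)
qed

lemma sum_shift_zero:
  fixes a :: "nat \<Rightarrow> 'a" and t d :: nat
  assumes "\<forall>i<d. a i = 0" shows "(\<Sum>i<t+d. a i) = (\<Sum>i<t. a (i + d))"
proof (induction t)
  case 0 then show ?case using assms by simp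
next
  case (Suc t) then show ?case by simp
qed

lemma sums_shift_iff:
  assumes z: "\<forall>i<d. a i = 0"
  shows "sums_in U (\<lambda>t. a (t + d)) x \<longleftrightarrow> sums_in U a x"
proof
  assume A: "sums_in U (\<lambda>t. a (t + d)) x"
  show "sums_in U a x" unfolding sums_in_def
  proof
    fix n
    obtain N where N: "\<forall>M\<ge>N. x - (\<Sum>i<M. a (i + d)) \<in> U n" using A unfolding sums_in_def by blast
    have "\<forall>M\<ge>N+d. x - (\<Sum>i<M. a i) \<in> U n"
    proof (intro allI impI)
      fix M assume M: "M \<ge> N + d"
      define t where "t = M - d"
      have Mt: "M = t + d" and tN: "t \<ge> N" using M unfolding t_def by auto
      have "x - (\<Sum>i<t. a (i + d)) \<in> U n" using N tN by blast
      moreover have "(\<Sum>i<M. a i) = (\<Sum>i<t. a (i + d))" unfolding Mt by (rule sum_shift_zero[OF z])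
      ultimately show "x - (\<Sum>i<M. a i) \<in> U n" by simp
    qed
    then show "\<exists>N. \<forall>M\<ge>N. x - (\<Sum>i<M. a i) \<in> U n" by (rule exI)
  qed
next
  assume A: "sums_in U a x"
  show "sums_in U (\<lambda>t. a (t + d)) x" unfolding sums_in_def
  proof
    fix n
    obtain N where N: "\<forall>M\<ge>N. x - (\<Sum>i<M. a i) \<in> U n" using A unfolding sums_in_def by blast
    have "\<forall>M\<ge>N. x - (\<Sum>i<M. a (i + d)) \<in> U n"
    proof (intro allI impI)
      fix M assume "M \<ge> N"
      then have "x - (\<Sum>i<M+d. a i) \<in> U n" using N by simp
      then show "x - (\<Sum>i<M. a (i + d)) \<in> U n" using sum_shift_zero[OF z, of M] by simp
    qed
    then show "\<exists>N. \<forall>M\<ge>N. x - (\<Sum>i<M. a (i + d)) \<in> U n" by (rule exI)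
  qed
qed

lemma sums_map:
  assumes add: "\<And>x y. \<phi> (x + y) = \<phi> x + \<phi> y"
    and cont: "\<forall>n. \<exists>m. \<forall>b\<in>U m. \<phi> b \<in> U n"
    and A: "sums_in U a x"
  shows "sums_in U (\<lambda>i. \<phi> (a i)) (\<phi> x)"
  unfolding sums_in_def
proof
  fix n
  have z: "\<phi> 0 = 0" using add[of 0 0] by simp
  have d: "\<phi> (x - y) = \<phi> x - \<phi> y" for x y using add[of "x - y" y] by simp
  have s: "\<phi> (\<Sum>i<M. a i) = (\<Sum>i<M. \<phi> (a i))" for M
    by (induction M) (simp_all add: z add)
  obtain m where m: "\<forall>b\<in>U m. \<phi> b \<in> U n" using cont by blast
  obtain N where N: "\<forall>M\<ge>N. x - (\<Sum>i<M. a i) \<in> U m" using A unfolding sums_in_def by blast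
  have "\<forall>M\<ge>N. \<phi> x - (\<Sum>i<M. \<phi> (a i)) \<in> U n"
  proof (intro allI impI)
    fix M assume "M \<ge> N"
    then have "\<phi> (x - (\<Sum>i<M. a i)) \<in> U n" using N m by blast
    then show "\<phi> x - (\<Sum>i<M. \<phi> (a i)) \<in> U n" by (simp add: d s)
  qed
  then show "\<exists>N. \<forall>M\<ge>N. \<phi> x - (\<Sum>i<M. \<phi> (a i)) \<in> U n" by (rule exI)
qed

lemma sums_closed:
  assumes A: "sums_in U a x" and K: "\<forall>i\<ge>K. a i \<in> U n"
  shows "x - (\<Sum>i<K. a i) \<in> U n"
proof -
  obtain N where N: "\<forall>M\<ge>N. x - (\<Sum>i<M. a i) \<in> U n" using A unfolding sums_in_def by blast
  define M where "M = max N K"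
  have 1: "x - (\<Sum>i<M. a i) \<in> U n" using N M_def by simp
  have "(\<Sum>i<M. a i) - (\<Sum>i<K. a i) = (\<Sum>i\<in>{K..<M}. a i)"
    unfolding M_def by (rule sum_lt_diff) simp
  also have "\<dots> \<in> U n" by (rule Usum) (use K in auto)
  finally have "(x - (\<Sum>i<M. a i)) + ((\<Sum>i<M. a i) - (\<Sum>i<K. a i)) \<in> U n"
    using 1 Uadd by blast
  moreover have "(x - (\<Sum>i<M. a i)) + ((\<Sum>i<M. a i) - (\<Sum>i<K. a i)) = x - (\<Sum>i<K. a i)" by simp
  ultimately show ?thesis by (rule Ueq)
qed

lemma sums_transfer:
  assumes A: "sums_in U a x"
    and D: "\<forall>n. \<exists>N. \<forall>M\<ge>N. (\<Sum>i<M. a i) - (\<Sum>i<M. b i) \<in> U n"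
  shows "sums_in U b x"
  unfolding sums_in_def
proof
  fix n
  obtain N1 where N1: "\<forall>M\<ge>N1. x - (\<Sum>i<M. a i) \<in> U n" using A unfolding sums_in_def by blast
  obtain N2 where N2: "\<forall>M\<ge>N2. (\<Sum>i<M. a i) - (\<Sum>i<M. b i) \<in> U n" using D by blast
  have "\<forall>M\<ge>max N1 N2. x - (\<Sum>i<M. b i) \<in> U n"
  proof (intro allI impI)
    fix M assume "M \<ge> max N1 N2"
    then have "(x - (\<Sum>i<M. a i)) + ((\<Sum>i<M. a i) - (\<Sum>i<M. b i)) \<in> U n"
      by (intro Uadd) (use N1 N2 in auto)
    moreover have "(x - (\<Sum>i<M. a i)) + ((\<Sum>i<M. a i) - (\<Sum>i<M. b i)) = x - (\<Sum>i<M. b i)"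
      by simp
    ultimately show "x - (\<Sum>i<M. b i) \<in> U n" by (rule Ueq)
  qed
  then show "\<exists>N. \<forall>M\<ge>N. x - (\<Sum>i<M. b i) \<in> U n" by (rule exI)
qed

lemma sums_setsum:
  fixes F :: "nat \<Rightarrow> nat \<Rightarrow> 'a" and j :: nat
  shows "(\<forall>l\<le>j. sums_in U (F l) (G l)) \<Longrightarrow> sums_in U (\<lambda>k. \<Sum>l\<le>j. F l k) (\<Sum>l\<le>j. G l)"
proof (induction j)
  case 0 then show ?case by simp
next
  case (Suc j)
  then show ?case using sums_add[of "\<lambda>k. \<Sum>l\<le>j. F l k" "\<Sum>l\<le>j. G l" "F (Suc j)" "G (Suc j)"]
    by simp
qed

lemma double_sum:
  assumes F: "\<forall>n. \<exists>N. \<forall>i k. N \<le> i + k \<longrightarrow> f i k \<in> U n"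
    and G: "\<forall>i. sums_in U (f i) (g i)"
  shows "\<forall>n. \<exists>N. \<forall>M\<ge>N. (\<Sum>i<M. g i) - (\<Sum>m<M. \<Sum>i\<le>m. f i (m - i)) \<in> U n"
proof
  fix n
  obtain N where N: "\<forall>i k. N \<le> i + k \<longrightarrow> f i k \<in> U n" using F by blast
  have "\<forall>M\<ge>N. (\<Sum>i<M. g i) - (\<Sum>m<M. \<Sum>i\<le>m. f i (m - i)) \<in> U n"
  proof (intro allI impI)
    fix M assume M: "M \<ge> N"
    have "(\<Sum>i<M. g i) - (\<Sum>m<M. \<Sum>i\<le>m. f i (m - i)) = (\<Sum>i<M. g i - (\<Sum>k<M-i. f i k))"
      by (simp add: reindex_tri sum_subtractf)
    also have "\<dots> \<in> U n"
    proof (rule Usum)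
      show "\<forall>i\<in>{..<M}. g i - (\<Sum>k<M-i. f i k) \<in> U n"
      proof
        fix i assume "i \<in> {..<M}"
        have "\<forall>k\<ge>M-i. f i k \<in> U n"
        proof (intro allI impI)
          fix k assume "k \<ge> M - i"
          then have "N \<le> i + k" using M by linarith
          then show "f i k \<in> U n" using N by blast
        qed
        then show "g i - (\<Sum>k<M-i. f i k) \<in> U n"
          by (rule sums_closed[OF G[rule_format]])
      qed
    qed simp
    finally show "(\<Sum>i<M. g i) - (\<Sum>m<M. \<Sum>i\<le>m. f i (m - i)) \<in> U n" .
  qed
  then show "\<exists>N. \<forall>M\<ge>N. (\<Sum>i<M. g i) - (\<Sum>m<M. \<Sum>i\<le>m. f i (m - i)) \<in> U n" by (rule exI)
qed

lemma null_mult: "null_seq U a \<Longrightarrow> null_seq U (\<lambda>i. a i * c i)"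
  unfolding null_seq_def using Umult2 by blast

end




locale EX = LT U for U :: "nat \<Rightarrow> 'a::comm_ring_1 set" +
  fixes e :: "nat \<Rightarrow> 'a \<Rightarrow> 'a" and s :: 'a
  assumes rexp: "rexp_hom U e"
    and sl: "\<forall>i. e i s = (if i = 0 then s else if i = 1 then 1 else 0)"
begin

lemma e_null: "null_seq U (\<lambda>i. e i b)" using rexp unfolding rexp_hom_def by blast
lemma e_add: "e i (b + c) = e i b + e i c" using rexp unfolding rexp_hom_def by blast
lemma e_mult: "e n (b * c) = cprod (\<lambda>i. e i b) (\<lambda>i. e i c) n" using rexp unfolding rexp_hom_def by blast
lemma e_one: "e i 1 = (if i = 0 then 1 else 0)" using rexp unfolding rexp_hom_def by blast
lemma e_cont: "\<forall>n. \<exists>m. \<forall>b\<in>U m. \<forall>i. e i b \<in> U n" using rexp unfolding rexp_hom_def by blast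
lemma e_0: "e 0 b = b" using rexp unfolding rexp_hom_def by blast
lemma e_comp: "e j (e i b) = of_nat ((i + j) choose i) * e (i + j) b" using rexp unfolding rexp_hom_def by blast

lemma e_cont1: "\<forall>n. \<exists>m. \<forall>b\<in>U m. e j b \<in> U n" using e_cont by blast

lemma e_zero: "e i 0 = 0" using e_add[of i 0 0] by simp
lemma e_neg: "e i (- b) = - e i b"
proof -
  have "e i b + e i (- b) = 0" using e_add[of i b "-b"] e_zero by simp
  then have "- e i b = e i (- b)" by (simp only: neg_eq_iff_add_eq_0)
  then show ?thesis by (rule sym)
qed

abbreviation "E \<equiv> fixed_ring e"

lemma fixed_mult: "c \<in> E \<Longrightarrow> e j (c * b) = c * e j b"
proof -
  assume c: "c \<in> E"
  have "e j (c * b) = (\<Sum>i\<le>j. e i c * e (j - i) b)" by (simp add: e_mult cprod_def)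
  also have "\<dots> = e 0 c * e (j - 0) b"
    by (rule sum_atMost_only0) (use c in \<open>simp add: fixed_ring_def\<close>)
  finally show ?thesis by (simp add: e_0)
qed

lemma E_mult: "c \<in> E \<Longrightarrow> d \<in> E \<Longrightarrow> c * d \<in> E"
  using fixed_mult unfolding fixed_ring_def by simp
lemma E_one: "1 \<in> E" using e_one unfolding fixed_ring_def by simp
lemma E_neg: "c \<in> E \<Longrightarrow> - c \<in> E" using e_neg unfolding fixed_ring_def by simp
lemma E_pow: "c \<in> E \<Longrightarrow> c ^ k \<in> E"
  by (induction k) (simp_all add: E_one E_mult)
lemma E_of_nat: "of_nat n \<in> E"
proof (induction n)
  case 0 then show ?case using e_zero by (simp add: fixed_ring_def)
next
  case (Suc n) then show ?case using e_add[of _ 1 "of_nat n"] e_one by (simp add: fixed_ring_def)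
qed

lemma e_spow: "e j (s ^ i) = (if j \<le> i then of_nat (i choose j) * s ^ (i - j) else 0)"
proof (induction i arbitrary: j)
  case 0 then show ?case by (simp add: e_one)
next
  case (Suc i)
  define g where "g l = e l s * e (j - l) (s ^ i)" for l
  have eq: "e j (s ^ Suc i) = (\<Sum>l\<le>j. g l)"
    by (simp add: e_mult cprod_def g_def)
  show ?case
  proof (cases j)
    case 0
    then show ?thesis using eq by (simp add: g_def e_0 sl)
  next
    case (Suc j')
    have "(\<Sum>l\<le>j. g l) = g 0 + (\<Sum>l\<le>j'. g (Suc l))" unfolding Suc by (rule sum.atMost_Suc_shift)
    also have "(\<Sum>l\<le>j'. g (Suc l)) = g (Suc 0)"
      by (rule sum_atMost_only0) (simp add: g_def sl)
    finally have "e j (s ^ Suc i) = s * e (Suc j') (s ^ i) + e j' (s ^ i)"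
      using eq by (simp add: g_def sl Suc)
    also have "\<dots> = s * (if Suc j' \<le> i then of_nat (i choose Suc j') * s ^ (i - Suc j') else 0)
        + (if j' \<le> i then of_nat (i choose j') * s ^ (i - j') else 0)"
      using Suc.IH by simp
    also have "\<dots> = (if j \<le> Suc i then of_nat (Suc i choose j) * s ^ (Suc i - j) else 0)"
    proof -
      consider "Suc j' \<le> i" | "j' = i" | "j' > i" by linarith
      then show ?thesis
      proof cases
        case 1
        define p where "p = i - Suc j'"
        have p1: "i - j' = Suc p" and p2: "Suc i - Suc j' = Suc p" using 1 unfolding p_def by simp_all
        have c1: "Suc j' \<le> i" "j' \<le> i" "j \<le> Suc i" using 1 Suc by simp_all
        have "s * (if Suc j' \<le> i then of_nat (i choose Suc j') * s ^ (i - Suc j') else 0)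
            + (if j' \<le> i then of_nat (i choose j') * s ^ (i - j') else 0)
            = s * (of_nat (i choose Suc j') * s ^ p) + of_nat (i choose j') * (s * s ^ p)"
          using c1 unfolding p1 p_def by simp
        also have "\<dots> = (of_nat (i choose j') + of_nat (i choose Suc j')) * (s * s ^ p)"
          by (simp add: algebra_simps)
        also have "\<dots> = (if j \<le> Suc i then of_nat (Suc i choose j) * s ^ (Suc i - j) else 0)"
          using c1 unfolding Suc p2 by simp
        finally show ?thesis .
      next
        case 2 then show ?thesis using Suc by simp
      next
        case 3 then show ?thesis using Suc by simp
      qed
    qed
    finally show ?thesis .
  qed
qed

lemma e_nspow: "e j ((- s) ^ k) = (- 1) ^ k * e j (s ^ k)"
proof -
  have 1: "(- s) ^ k = (- 1) ^ k * s ^ k" by (rule power_minus)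
  have 2: "(- 1 :: 'a) ^ k \<in> E" by (intro E_pow E_neg E_one)
  show ?thesis unfolding 1 by (rule fixed_mult[OF 2])
qed

definition piE :: "'a \<Rightarrow> 'a" where "piE y = ssum U (\<lambda>k. e k y * (- s) ^ k)"

lemma piE_sums: "sums_in U (\<lambda>k. e k y * (- s) ^ k) (piE y)"
  unfolding piE_def by (rule ssum_sums, rule null_mult, rule e_null)

lemma piE_add: "piE (x + y) = piE x + piE y"
proof -
  have "sums_in U (\<lambda>k. e k x * (- s) ^ k + e k y * (- s) ^ k) (piE x + piE y)"
    by (rule sums_add[OF piE_sums piE_sums])
  then have "sums_in U (\<lambda>k. e k (x + y) * (- s) ^ k) (piE x + piE y)"
    by (simp add: e_add distrib_right)
  then show ?thesis using piE_sums sums_unique by blast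
qed

lemma piE_cont: "\<forall>n. \<exists>m. \<forall>y\<in>U m. piE y \<in> U n"
proof
  fix n
  obtain m where m: "\<forall>b\<in>U m. \<forall>i. e i b \<in> U n" using e_cont by blast
  have "\<forall>y\<in>U m. piE y \<in> U n"
  proof
    fix y assume "y \<in> U m"
    then have "\<forall>k\<ge>0. e k y * (- s) ^ k \<in> U n" using m Umult2 by blast
    from sums_closed[OF piE_sums this] show "piE y \<in> U n" by simp
  qed
  then show "\<exists>m. \<forall>y\<in>U m. piE y \<in> U n" by blast
qed

lemma piE_cs:
  assumes c: "c \<in> E" shows "piE (c * s ^ i) = (if i = 0 then c else 0)"
proof -
  have t: "e k (c * s ^ i) * (- s) ^ k = c * ((if k \<le> i then of_nat (i choose k) * s ^ (i - k) else 0) * (- s) ^ k)" for k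
    by (simp add: fixed_mult[OF c] e_spow)
  have "sums_in U (\<lambda>k. e k (c * s ^ i) * (- s) ^ k) (\<Sum>k<Suc i. e k (c * s ^ i) * (- s) ^ k)"
    by (rule sums_finite) (simp add: t)
  moreover have "(\<Sum>k<Suc i. e k (c * s ^ i) * (- s) ^ k) = c * (\<Sum>k\<le>i. of_nat (i choose k) * (- s) ^ k * s ^ (i - k))"
  proof -
    have "(\<Sum>k<Suc i. e k (c * s ^ i) * (- s) ^ k) = (\<Sum>k\<le>i. c * (of_nat (i choose k) * (- s) ^ k * s ^ (i - k)))"
      unfolding lessThan_Suc_atMost
    proof (rule sum.cong)
      fix k assume "k \<in> {..i}"
      then show "e k (c * s ^ i) * (- s) ^ k = c * (of_nat (i choose k) * (- s) ^ k * s ^ (i - k))"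
        unfolding t by (simp add: ac_simps)
    qed simp
    then show ?thesis by (simp only: sum_distrib_left)
  qed
  moreover have "(\<Sum>k\<le>i. of_nat (i choose k) * (- s) ^ k * s ^ (i - k)) = (- s + s) ^ i"
    by (rule binomial_ring[symmetric])
  ultimately have "sums_in U (\<lambda>k. e k (c * s ^ i) * (- s) ^ k) (c * 0 ^ i)" by simp
  then have "piE (c * s ^ i) = c * 0 ^ i" using piE_sums sums_unique by blast
  then show ?thesis by (simp add: zero_power)
qed

lemma piE_c: "c \<in> E \<Longrightarrow> piE c = c"
  using piE_cs[of c 0] by simp

lemma piE_eval:
  assumes c: "\<forall>i. c i \<in> E" and n: "null_seq U c"
  shows "piE (ssum U (\<lambda>i. c i * s ^ i)) = c 0"
proof -
  have "sums_in U (\<lambda>i. c i * s ^ i) (ssum U (\<lambda>i. c i * s ^ i))"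
    by (rule ssum_sums, rule null_mult, rule n)
  then have A: "sums_in U (\<lambda>i. piE (c i * s ^ i)) (piE (ssum U (\<lambda>i. c i * s ^ i)))"
    by (rule sums_map[OF piE_add piE_cont])
  have "sums_in U (\<lambda>i. piE (c i * s ^ i)) (\<Sum>i<1. piE (c i * s ^ i))"
    by (rule sums_finite) (simp add: piE_cs c)
  then have "sums_in U (\<lambda>i. piE (c i * s ^ i)) (c 0)" by (simp add: piE_c c)
  then show ?thesis using A sums_unique by blast
qed

lemma e_evalser:
  assumes a: "\<forall>i. a i \<in> E" and n: "null_seq U a"
  shows "sums_in U (\<lambda>k. of_nat ((k + j) choose j) * a (k + j) * s ^ k) (e j (ssum U (\<lambda>i. a i * s ^ i)))"
proof -
  have "sums_in U (\<lambda>i. a i * s ^ i) (ssum U (\<lambda>i. a i * s ^ i))"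
    by (rule ssum_sums, rule null_mult, rule n)
  then have A: "sums_in U (\<lambda>i. e j (a i * s ^ i)) (e j (ssum U (\<lambda>i. a i * s ^ i)))"
    by (rule sums_map[OF e_add e_cont1])
  define b where "b i = e j (a i * s ^ i)" for i
  have b: "b i = a i * (if j \<le> i then of_nat (i choose j) * s ^ (i - j) else 0)" for i
    unfolding b_def using a by (simp add: fixed_mult e_spow)
  have "sums_in U (\<lambda>t. b (t + j)) (e j (ssum U (\<lambda>i. a i * s ^ i)))"
    using sums_shift_iff[of j b] A b unfolding b_def by simp
  moreover have "b (t + j) = of_nat ((t + j) choose j) * a (t + j) * s ^ t" for t
    by (simp add: b ac_simps)
  ultimately show ?thesis by simp
qed

lemma coef:
  assumes a: "\<forall>i. a i \<in> E" and n: "null_seq U a"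
  shows "piE (e j (ssum U (\<lambda>i. a i * s ^ i))) = a j"
proof -
  define c where "c k = of_nat ((k + j) choose j) * a (k + j)" for k
  have "e j (ssum U (\<lambda>i. a i * s ^ i)) = ssum U (\<lambda>k. c k * s ^ k)"
    using e_evalser[OF a n, of j] ssum_eq unfolding c_def by metis
  moreover have "\<forall>i. c i \<in> E" unfolding c_def using a E_mult E_of_nat by blast
  moreover have "null_seq U c" unfolding c_def null_seq_def
  proof
    fix m
    obtain N where "\<forall>i\<ge>N. a i \<in> U m" using n unfolding null_seq_def by blast
    then have "\<forall>i\<ge>N. of_nat ((i + j) choose j) * a (i + j) \<in> U m" using Umult by simp
    then show "\<exists>N. \<forall>i\<ge>N. of_nat ((i + j) choose j) * a (i + j) \<in> U m" by blast
  qed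
  ultimately have "piE (e j (ssum U (\<lambda>i. a i * s ^ i))) = c 0" using piE_eval by simp
  then show ?thesis by (simp add: c_def)
qed


lemma sums_transfer2:
  assumes A: "sums_in U a x"
    and D: "\<forall>n. \<exists>N. \<forall>M\<ge>N. (\<Sum>i<M. b i) - (\<Sum>i<M. a i) \<in> U n"
  shows "sums_in U b x"
proof (rule sums_transfer[OF A])
  show "\<forall>n. \<exists>N. \<forall>M\<ge>N. (\<Sum>i<M. a i) - (\<Sum>i<M. b i) \<in> U n"
  proof
    fix n
    obtain N where N: "\<forall>M\<ge>N. (\<Sum>i<M. b i) - (\<Sum>i<M. a i) \<in> U n" using D by blast
    have "\<forall>M\<ge>N. (\<Sum>i<M. a i) - (\<Sum>i<M. b i) \<in> U n"
    proof (intro allI impI)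
      fix M assume "M \<ge> N"
      then have "- ((\<Sum>i<M. b i) - (\<Sum>i<M. a i)) \<in> U n" using N Uneg by blast
      then show "(\<Sum>i<M. a i) - (\<Sum>i<M. b i) \<in> U n" by simp
    qed
    then show "\<exists>N. \<forall>M\<ge>N. (\<Sum>i<M. a i) - (\<Sum>i<M. b i) \<in> U n" by (rule exI)
  qed
qed

lemma piE_fixed:
  assumes j: "j > 0" shows "e j (piE y) = 0"
proof -
  have A: "sums_in U (\<lambda>k. e j (e k y * (- s) ^ k)) (e j (piE y))"
    by (rule sums_map[OF e_add e_cont1 piE_sums])
  define F where "F d k = e d ((- s) ^ k) * e (j - d) (e k y)" for d k
  have T: "e j (e k y * (- s) ^ k) = (\<Sum>d\<le>j. F d k)" for k
  proof -
    have "e j (e k y * (- s) ^ k) = e j ((- s) ^ k * e k y)" by (simp only: mult.commute)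
    also have "\<dots> = (\<Sum>d\<le>j. F d k)" by (simp add: e_mult cprod_def F_def)
    finally show ?thesis .
  qed
  define H where "H t = (- 1) ^ t * of_nat ((t + j) choose j) * s ^ t * e (t + j) y" for t
  have Hn: "null_seq U H"
    unfolding null_seq_def
  proof
    fix n
    obtain N where N: "\<forall>i\<ge>N. e i y \<in> U n" using e_null unfolding null_seq_def by blast
    have "\<forall>t\<ge>N. H t \<in> U n"
    proof (intro allI impI)
      fix t assume "t \<ge> N"
      then have "e (t + j) y \<in> U n" using N by simp
      then show "H t \<in> U n" unfolding H_def by (rule Umult)
    qed
    then show "\<exists>N. \<forall>t\<ge>N. H t \<in> U n" by (rule exI)
  qed
  obtain G where G: "sums_in U H G" using sums_exists[OF Hn] by blast
  have FS: "sums_in U (F d) ((- 1) ^ d * of_nat (j choose d) * G)" if d: "d \<le> j" for d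
  proof -
    have z: "\<forall>k<d. F d k = 0" unfolding F_def by (simp add: e_nspow e_spow)
    have sh: "F d (t + d) = (- 1) ^ d * of_nat (j choose d) * H t" for t
    proof -
      have ch: "(of_nat ((t + d) choose d) :: 'a) * of_nat ((t + j) choose (t + d))
          = of_nat (j choose d) * of_nat ((t + j) choose j)"
        using arg_cong[OF choose_ident[OF d, of t], of "of_nat :: nat \<Rightarrow> 'a"] by (simp only: of_nat_mult)
      have tj: "t + d + (j - d) = t + j" using d by simp
      have "F d (t + d) = ((- 1) ^ (t + d) * (of_nat ((t + d) choose d) * s ^ t))
           * (of_nat ((t + d + (j - d)) choose (t + d)) * e (t + d + (j - d)) y)"
        unfolding F_def by (simp add: e_nspow e_spow e_comp)
      also have "\<dots> = (- 1) ^ d * (- 1) ^ t * s ^ t * e (t + j) y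
           * (of_nat ((t + d) choose d) * of_nat ((t + j) choose (t + d)))"
        unfolding tj by (simp add: power_add ac_simps)
      also have "\<dots> = (- 1) ^ d * of_nat (j choose d) * H t"
        unfolding ch H_def by (simp add: ac_simps)
      finally show ?thesis .
    qed
    have "sums_in U (\<lambda>t. (- 1) ^ d * of_nat (j choose d) * H t) ((- 1) ^ d * of_nat (j choose d) * G)"
      by (rule sums_cmult[OF G])
    then have "sums_in U (\<lambda>t. F d (t + d)) ((- 1) ^ d * of_nat (j choose d) * G)" by (simp only: sh)
    then show ?thesis using sums_shift_iff[OF z] by simp
  qed
  have "sums_in U (\<lambda>k. \<Sum>d\<le>j. F d k) (\<Sum>d\<le>j. (- 1) ^ d * of_nat (j choose d) * G)"
    by (rule sums_setsum) (simp add: FS)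
  moreover have "(\<Sum>d\<le>j. (- 1) ^ d * of_nat (j choose d) * G) = 0"
  proof -
    have "(\<Sum>d\<le>j. (- 1) ^ d * of_nat (j choose d) * G) = (\<Sum>d\<le>j. (- 1) ^ d * of_nat (j choose d)) * G"
      by (simp only: sum_distrib_right)
    also have "(\<Sum>d\<le>j. (- 1) ^ d * of_nat (j choose d)) = (0::'a)"
      by (rule choose_alternating_sum[OF j])
    finally show ?thesis by simp
  qed
  ultimately have "sums_in U (\<lambda>k. e j (e k y * (- s) ^ k)) 0" by (simp only: T)
  then show ?thesis using A sums_unique by blast
qed

lemma eval_piE: "sums_in U (\<lambda>i. piE (e i b) * s ^ i) b"
proof -
  define f where "f i k = e k (e i b) * (- s) ^ k * s ^ i" for i k
  have G: "\<forall>i. sums_in U (f i) (piE (e i b) * s ^ i)"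
    unfolding f_def using sums_rmult[OF piE_sums] by blast
  have F: "\<forall>n. \<exists>N. \<forall>i k. N \<le> i + k \<longrightarrow> f i k \<in> U n"
  proof
    fix n
    obtain N where N: "\<forall>m\<ge>N. e m b \<in> U n" using e_null unfolding null_seq_def by blast
    have "\<forall>i k. N \<le> i + k \<longrightarrow> f i k \<in> U n"
    proof (intro allI impI)
      fix i k assume "N \<le> i + k"
      then have "e (i + k) b \<in> U n" using N by blast
      then have "of_nat ((i + k) choose i) * e (i + k) b \<in> U n" by (rule Umult)
      then have "of_nat ((i + k) choose i) * e (i + k) b * (- s) ^ k \<in> U n" by (rule Umult2)
      then have "of_nat ((i + k) choose i) * e (i + k) b * (- s) ^ k * s ^ i \<in> U n" by (rule Umult2)
      then show "f i k \<in> U n" unfolding f_def e_comp .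
    qed
    then show "\<exists>N. \<forall>i k. N \<le> i + k \<longrightarrow> f i k \<in> U n" by (rule exI)
  qed
  have h: "(\<lambda>m. \<Sum>i\<le>m. f i (m - i)) = (\<lambda>m. if m = 0 then b else 0)"
  proof
    fix m
    have "(\<Sum>i\<le>m. f i (m - i)) = (\<Sum>i\<le>m. e m b * s ^ m * (of_nat (m choose i) * 1 ^ i * (- 1) ^ (m - i)))"
    proof (rule sum.cong)
      fix i assume "i \<in> {..m}"
      then have im: "i \<le> m" by simp
      have pw: "s ^ (m - i) * s ^ i = s ^ m" using im by (simp add: power_add[symmetric])
      have ch: "i + (m - i) = m" using im by simp
      have "f i (m - i) = of_nat (m choose i) * e m b * ((- 1) ^ (m - i) * s ^ (m - i)) * s ^ i"
        unfolding f_def e_comp ch power_minus[of s] ..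
      also have "\<dots> = e m b * (s ^ (m - i) * s ^ i) * (of_nat (m choose i) * (- 1) ^ (m - i))"
        by (simp only: ac_simps)
      also have "\<dots> = e m b * s ^ m * (of_nat (m choose i) * 1 ^ i * (- 1) ^ (m - i))"
        unfolding pw by simp
      finally show "f i (m - i) = e m b * s ^ m * (of_nat (m choose i) * 1 ^ i * (- 1) ^ (m - i))" .
    qed simp
    also have "\<dots> = e m b * s ^ m * (1 + - 1) ^ m"
      by (simp only: binomial_ring[of 1 "- 1" m] sum_distrib_left mult.assoc)
    also have "\<dots> = (if m = 0 then b else 0)" by (simp add: e_0 power_0_left)
    finally show "(\<Sum>i\<le>m. f i (m - i)) = (if m = 0 then b else 0)" .
  qed
  have hs: "sums_in U (\<lambda>m. \<Sum>i\<le>m. f i (m - i)) b"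
    unfolding h using sums_finite[of 1 "\<lambda>m. if m = 0 then b else 0"] by simp
  have D: "\<forall>n. \<exists>N. \<forall>M\<ge>N. (\<Sum>i<M. piE (e i b) * s ^ i) - (\<Sum>m<M. \<Sum>i\<le>m. f i (m - i)) \<in> U n"
    by (rule double_sum[OF F G])
  show ?thesis by (rule sums_transfer2[OF hs D])
qed

lemma eval_cprod:
  assumes na: "null_seq U a" and nb: "null_seq U b"
  shows "sums_in U (\<lambda>m. cprod a b m * s ^ m) (ssum U (\<lambda>i. a i * s ^ i) * ssum U (\<lambda>i. b i * s ^ i))"
proof -
  define X where "X = ssum U (\<lambda>i. a i * s ^ i)"
  define Y where "Y = ssum U (\<lambda>i. b i * s ^ i)"
  have SX: "sums_in U (\<lambda>i. a i * s ^ i) X" unfolding X_def by (rule ssum_sums[OF null_mult[OF na]])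
  have SY: "sums_in U (\<lambda>i. b i * s ^ i) Y" unfolding Y_def by (rule ssum_sums[OF null_mult[OF nb]])
  define f where "f i k = (a i * s ^ i) * (b k * s ^ k)" for i k
  have G: "\<forall>i. sums_in U (f i) ((a i * s ^ i) * Y)" unfolding f_def using sums_cmult[OF SY] by blast
  have GX: "sums_in U (\<lambda>i. (a i * s ^ i) * Y) (X * Y)" by (rule sums_rmult[OF SX])
  have F: "\<forall>n. \<exists>N. \<forall>i k. N \<le> i + k \<longrightarrow> f i k \<in> U n"
  proof
    fix n
    obtain Na where Na: "\<forall>i\<ge>Na. a i \<in> U n" using na unfolding null_seq_def by blast
    obtain Nb where Nb: "\<forall>i\<ge>Nb. b i \<in> U n" using nb unfolding null_seq_def by blast
    have "\<forall>i k. Na + Nb \<le> i + k \<longrightarrow> f i k \<in> U n"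
    proof (intro allI impI)
      fix i k assume "Na + Nb \<le> i + k"
      then have "Na \<le> i \<or> Nb \<le> k" by linarith
      then show "f i k \<in> U n"
      proof
        assume "Na \<le> i"
        then have "a i \<in> U n" using Na by blast
        then have "a i * s ^ i \<in> U n" by (rule Umult2)
        then show "f i k \<in> U n" unfolding f_def by (rule Umult2)
      next
        assume "Nb \<le> k"
        then have "b k \<in> U n" using Nb by blast
        then have "b k * s ^ k \<in> U n" by (rule Umult2)
        then show "f i k \<in> U n" unfolding f_def by (rule Umult)
      qed
    qed
    then show "\<exists>N. \<forall>i k. N \<le> i + k \<longrightarrow> f i k \<in> U n" by (rule exI)
  qed
  have h: "(\<lambda>m. \<Sum>i\<le>m. f i (m - i)) = (\<lambda>m. cprod a b m * s ^ m)"
  proof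
    fix m
    have "(\<Sum>i\<le>m. f i (m - i)) = (\<Sum>i\<le>m. a i * b (m - i) * s ^ m)"
    proof (rule sum.cong)
      fix i assume "i \<in> {..m}"
      then have im: "i \<le> m" by simp
      have pw: "s ^ i * s ^ (m - i) = s ^ m" using im by (simp add: power_add[symmetric])
      have "f i (m - i) = a i * b (m - i) * (s ^ i * s ^ (m - i))" unfolding f_def by (simp only: ac_simps)
      then show "f i (m - i) = a i * b (m - i) * s ^ m" unfolding pw .
    qed simp
    also have "\<dots> = cprod a b m * s ^ m" unfolding cprod_def by (simp only: sum_distrib_right)
    finally show "(\<Sum>i\<le>m. f i (m - i)) = cprod a b m * s ^ m" .
  qed
  have D: "\<forall>n. \<exists>N. \<forall>M\<ge>N. (\<Sum>i<M. (a i * s ^ i) * Y) - (\<Sum>m<M. \<Sum>i\<le>m. f i (m - i)) \<in> U n"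
    by (rule double_sum[OF F G])
  have "sums_in U (\<lambda>m. \<Sum>i\<le>m. f i (m - i)) (X * Y)" by (rule sums_transfer[OF GX D])
  then show ?thesis unfolding h X_def Y_def .
qed

end

theorem corollary2p18:
  fixes U :: "nat \<Rightarrow> 'a::comm_ring_1 set"
    and e :: "nat \<Rightarrow> 'a \<Rightarrow> 'a"
    and s :: 'a
  assumes "lin_top U"
    and "complete_lt U"
    and "rexp_hom U e"
    and "\<forall>i. e i s = (if i = 0 then s else if i = 1 then 1 else 0)"
  shows
    "(\<forall>a\<in>rps (fixed_ring e) U. sums_in U (\<lambda>i. a i * s ^ i) (rps_eval U s a))
     \<and> (\<forall>a\<in>rps (fixed_ring e) U. \<forall>b\<in>rps (fixed_ring e) U.
          rps_eval U s (\<lambda>i. a i + b i) = rps_eval U s a + rps_eval U s b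
          \<and> rps_eval U s (cprod a b) = rps_eval U s a * rps_eval U s b)
     \<and> rps_eval U s (\<lambda>i. if i = 0 then 1 else 0) = 1
     \<and> bij_betw (rps_eval U s) (rps (fixed_ring e) U) UNIV
     \<and> (\<forall>n. \<exists>m. \<forall>a\<in>rps (fixed_ring e) U. (\<forall>i. a i \<in> U m) \<longrightarrow> rps_eval U s a \<in> U n)
     \<and> (\<forall>n. \<exists>m. \<forall>a\<in>rps (fixed_ring e) U. rps_eval U s a \<in> U m \<longrightarrow> (\<forall>i. a i \<in> U n))
     \<and> (\<forall>a\<in>rps (fixed_ring e) U. \<forall>j.
          e j (rps_eval U s a) = rps_eval U s (\<lambda>k. of_nat ((k + j) choose j) * a (k + j)))"
proof -
  interpret EX U e s by unfold_locales (use assms in auto)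
  define R where "R = rps (fixed_ring e) U"
  have R: "a \<in> R \<longleftrightarrow> (\<forall>i. a i \<in> fixed_ring e) \<and> null_seq U a" for a
    unfolding R_def rps_def by simp
  have S: "sums_in U (\<lambda>i. a i * s ^ i) (rps_eval U s a)" if "a \<in> R" for a
    unfolding rps_eval_ssum by (rule ssum_sums, rule null_mult) (use that R in blast)
  have c1: "\<forall>a\<in>R. sums_in U (\<lambda>i. a i * s ^ i) (rps_eval U s a)" using S by blast
  have c2: "\<forall>a\<in>R. \<forall>b\<in>R.
          rps_eval U s (\<lambda>i. a i + b i) = rps_eval U s a + rps_eval U s b
          \<and> rps_eval U s (cprod a b) = rps_eval U s a * rps_eval U s b"
  proof (intro ballI conjI)
    fix a b assume a: "a \<in> R" and b: "b \<in> R"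
    have "sums_in U (\<lambda>i. a i * s ^ i + b i * s ^ i) (rps_eval U s a + rps_eval U s b)"
      by (rule sums_add[OF S[OF a] S[OF b]])
    then have "sums_in U (\<lambda>i. (a i + b i) * s ^ i) (rps_eval U s a + rps_eval U s b)"
      by (simp only: distrib_right)
    then show "rps_eval U s (\<lambda>i. a i + b i) = rps_eval U s a + rps_eval U s b"
      unfolding rps_eval_ssum[of U s "\<lambda>i. a i + b i"] by (rule ssum_eq)
    have na: "null_seq U a" and nb: "null_seq U b" using a b R by blast+
    show "rps_eval U s (cprod a b) = rps_eval U s a * rps_eval U s b"
      unfolding rps_eval_ssum by (rule ssum_eq[OF eval_cprod[OF na nb]])
  qed
  have c3: "rps_eval U s (\<lambda>i. if i = 0 then 1 else 0) = 1"
  proof -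
    have "sums_in U (\<lambda>i. (if i = 0 then 1 else 0) * s ^ i) (\<Sum>i<1. (if i = 0 then 1 else 0) * s ^ i)"
      by (rule sums_finite) simp
    then have "sums_in U (\<lambda>i. (if i = 0 then 1 else 0) * s ^ i) 1" by simp
    then show ?thesis unfolding rps_eval_ssum by (rule ssum_eq)
  qed
  have coefR: "piE (e j (rps_eval U s a)) = a j" if "a \<in> R" for a j
    unfolding rps_eval_ssum by (rule coef) (use that R in blast)+
  have c4: "bij_betw (rps_eval U s) R UNIV"
    unfolding bij_betw_def
  proof
    show "inj_on (rps_eval U s) R"
    proof (rule inj_onI)
      fix a b assume a: "a \<in> R" and b: "b \<in> R" and eq: "rps_eval U s a = rps_eval U s b"
      show "a = b"
      proof
        fix j show "a j = b j" using coefR[OF a, of j] coefR[OF b, of j] eq by simp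
      qed
    qed
    show "rps_eval U s ` R = UNIV"
    proof (rule set_eqI, rule iffI)
      fix y :: 'a assume "y \<in> UNIV"
      define a where "a i = piE (e i y)" for i
      have fa: "\<forall>i. a i \<in> fixed_ring e"
        unfolding a_def fixed_ring_def using piE_fixed by blast
      have na: "null_seq U a"
        unfolding null_seq_def
      proof
        fix n
        obtain m where m: "\<forall>y\<in>U m. piE y \<in> U n" using piE_cont by blast
        obtain N where N: "\<forall>i\<ge>N. e i y \<in> U m" using e_null unfolding null_seq_def by blast
        have "\<forall>i\<ge>N. a i \<in> U n" unfolding a_def using m N by blast
        then show "\<exists>N. \<forall>i\<ge>N. a i \<in> U n" by (rule exI)
      qed
      have aR: "a \<in> R" using fa na R by blast
      have "rps_eval U s a = y"
        unfolding rps_eval_ssum a_def by (rule ssum_eq[OF eval_piE])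
      then show "y \<in> rps_eval U s ` R" using aR by blast
    qed simp
  qed
  have c5: "\<forall>n. \<exists>m. \<forall>a\<in>R. (\<forall>i. a i \<in> U m) \<longrightarrow> rps_eval U s a \<in> U n"
  proof
    fix n
    have "\<forall>a\<in>R. (\<forall>i. a i \<in> U n) \<longrightarrow> rps_eval U s a \<in> U n"
    proof (intro ballI impI)
      fix a assume a: "a \<in> R" and ai: "\<forall>i. a i \<in> U n"
      have "\<forall>i\<ge>0. a i * s ^ i \<in> U n" using ai Umult2 by blast
      from sums_closed[OF S[OF a] this] show "rps_eval U s a \<in> U n" by simp
    qed
    then show "\<exists>m. \<forall>a\<in>R. (\<forall>i. a i \<in> U m) \<longrightarrow> rps_eval U s a \<in> U n" by (rule exI)
  qed
  have c6: "\<forall>n. \<exists>m. \<forall>a\<in>R. rps_eval U s a \<in> U m \<longrightarrow> (\<forall>i. a i \<in> U n)"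
  proof
    fix n
    obtain m1 where m1: "\<forall>y\<in>U m1. piE y \<in> U n" using piE_cont by blast
    obtain m where m: "\<forall>b\<in>U m. \<forall>i. e i b \<in> U m1" using e_cont by blast
    have "\<forall>a\<in>R. rps_eval U s a \<in> U m \<longrightarrow> (\<forall>i. a i \<in> U n)"
    proof (intro ballI impI allI)
      fix a i assume a: "a \<in> R" and ev: "rps_eval U s a \<in> U m"
      have "piE (e i (rps_eval U s a)) \<in> U n" using m1 m ev by blast
      then show "a i \<in> U n" using coefR[OF a] by simp
    qed
    then show "\<exists>m. \<forall>a\<in>R. rps_eval U s a \<in> U m \<longrightarrow> (\<forall>i. a i \<in> U n)" by (rule exI)
  qed
  have c7: "\<forall>a\<in>R. \<forall>j. e j (rps_eval U s a) = rps_eval U s (\<lambda>k. of_nat ((k + j) choose j) * a (k + j))"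
  proof (intro ballI allI)
    fix a j assume a: "a \<in> R"
    have fa: "\<forall>i. a i \<in> fixed_ring e" and na: "null_seq U a" using a R by blast+
    show "e j (rps_eval U s a) = rps_eval U s (\<lambda>k. of_nat ((k + j) choose j) * a (k + j))"
      unfolding rps_eval_ssum by (rule ssum_eq[OF e_evalser[OF fa na], symmetric])
  qed
  show ?thesis using c1 c2 c3 c4 c5 c6 c7 unfolding R_def by blast
qed


end
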